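(* Let $\langle S, \preceq\rangle$ be a partially ordered set and let $\mathcal{G}$ be a group acting on $S$. For $a \in S$ write $[a] = \{Ta : T \in \mathcal{G}\}$ and let $S/\mathcal{G}$ be the set of these equivalence classes. Define the strong induced relation on $S/\mathcal{G}$ by: $A \preceq_{\mathcal{G},s} B$ iff for all $a \in A$ there exists $b \in B$ with $a \preceq b$; and the weak induced relation by: $A \preceq_{\mathcal{G},w} B$ iff there exist $a \in A$ and $b \in B$ with $a \preceq b$. Then: (1) the strong relation $\preceq_{\mathcal{G},s}$ is a preorder on $S/\mathcal{G}$; (2) if $\mathcal{G}$ is increasing on $S$ (i.e. for all $T \in \mathcal{G}$ and $a,b \in S$, $a \preceq b$ implies $Ta \preceq Tb$), then the strong and weak relations coincide; (3) if $\mathcal{G}$ acts transversely on $S$ (i.e. for all $T \in \mathcal{G}$ and $a \in S$, $Ta \preceq a$ implies $Ta = a$), then the strong relation $\preceq_{\mathcal{G},s}$ is a partial order on $S/\mathcal{G}$. *)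

theory Defs
  imports "HOL-Algebra.Group_Action"
begin

definition strong_rel :: "('g, 'c) monoid_scheme \<Rightarrow> 'a set \<Rightarrow> ('g \<Rightarrow> 'a \<Rightarrow> 'a) \<Rightarrow> 'a rel \<Rightarrow> 'a set rel" where
  "strong_rel G S \<phi> r = {(A, B). A \<in> orbits G S \<phi> \<and> B \<in> orbits G S \<phi> \<and> (\<forall>a\<in>A. \<exists>b\<in>B. (a, b) \<in> r)}"

definition weak_rel :: "('g, 'c) monoid_scheme \<Rightarrow> 'a set \<Rightarrow> ('g \<Rightarrow> 'a \<Rightarrow> 'a) \<Rightarrow> 'a rel \<Rightarrow> 'a set rel" where
  "weak_rel G S \<phi> r = {(A, B). A \<in> orbits G S \<phi> \<and> B \<in> orbits G S \<phi> \<and> (\<exists>a\<in>A. \<exists>b\<in>B. (a, b) \<in> r)}"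

definition increasing_action :: "('g, 'c) monoid_scheme \<Rightarrow> 'a set \<Rightarrow> ('g \<Rightarrow> 'a \<Rightarrow> 'a) \<Rightarrow> 'a rel \<Rightarrow> bool" where
  "increasing_action G S \<phi> r \<longleftrightarrow>
     (\<forall>T\<in>carrier G. \<forall>a\<in>S. \<forall>b\<in>S. (a, b) \<in> r \<longrightarrow> (\<phi> T a, \<phi> T b) \<in> r)"

definition transverse_action :: "('g, 'c) monoid_scheme \<Rightarrow> 'a set \<Rightarrow> ('g \<Rightarrow> 'a \<Rightarrow> 'a) \<Rightarrow> 'a rel \<Rightarrow> bool" where
  "transverse_action G S \<phi> r \<longleftrightarrow>
     (\<forall>T\<in>carrier G. \<forall>a\<in>S. (\<phi> T a, a) \<in> r \<longrightarrow> \<phi> T a = a)"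

end

theory Submission
  imports Defs
begin

context group_action
begin

lemma orb_sub: "A \<in> orbits G E \<phi> \<Longrightarrow> A \<subseteq> E"
  unfolding orbits_def orbit_def using element_image by blast

lemma orb_ne: "A \<in> orbits G E \<phi> \<Longrightarrow> \<exists>a. a \<in> A"
  unfolding orbits_def using orbit_refl by blast

lemma orb_of: "A \<in> orbits G E \<phi> \<Longrightarrow> a \<in> A \<Longrightarrow> A = orbit G \<phi> a"
proof -
  assume A: "A \<in> orbits G E \<phi>" and a: "a \<in> A"
  then obtain x where x: "x \<in> E" "A = orbit G \<phi> x" unfolding orbits_def by blast
  have aE: "a \<in> E" using orb_sub[OF A] a by blast
  show ?thesis
  proof
    show "A \<subseteq> orbit G \<phi> a"
    proof
      fix z assume z: "z \<in> A"
      have zE: "z \<in> E" using orb_sub[OF A] z by blast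
      have "x \<in> orbit G \<phi> a" using orbit_sym[OF x(1) aE] a x by blast
      thus "z \<in> orbit G \<phi> a" using orbit_trans[OF aE x(1) zE] z x by blast
    qed
    show "orbit G \<phi> a \<subseteq> A"
    proof
      fix z assume z: "z \<in> orbit G \<phi> a"
      have zE: "z \<in> E" using z element_image aE unfolding orbit_def by blast
      show "z \<in> A" using orbit_trans[OF x(1) aE zE] z a x by blast
    qed
  qed
qed

lemma orb_move: "A \<in> orbits G E \<phi> \<Longrightarrow> a \<in> A \<Longrightarrow> a' \<in> A \<Longrightarrow> \<exists>g\<in>carrier G. a' = \<phi> g a"
  using orb_of unfolding orbit_def by blast

lemma orb_img: "A \<in> orbits G E \<phi> \<Longrightarrow> a \<in> A \<Longrightarrow> g \<in> carrier G \<Longrightarrow> \<phi> g a \<in> A"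
  using orb_of unfolding orbit_def by blast

end

theorem theorem1:
  fixes G :: "('g, 'c) monoid_scheme" and S :: "'a set" and \<phi> :: "'g \<Rightarrow> 'a \<Rightarrow> 'a" and r :: "'a rel"
  assumes po: "partial_order_on S r"
    and act: "group_action G S \<phi>"
  shows "preorder_on (orbits G S \<phi>) (strong_rel G S \<phi> r)
         \<and> (increasing_action G S \<phi> r \<longrightarrow> strong_rel G S \<phi> r = weak_rel G S \<phi> r)
         \<and> (transverse_action G S \<phi> r \<longrightarrow> partial_order_on (orbits G S \<phi>) (strong_rel G S \<phi> r))"
proof -
  interpret group_action G S \<phi> by (rule act)
  interpret group G using group_hom group_hom.axioms(1) by auto
  note P = partial_order_onD[OF po]
  have refl: "refl_on S r" and tr: "trans r" and anti: "antisym r" and sub: "r \<subseteq> S \<times> S"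
    using P by auto
  have pre: "preorder_on (orbits G S \<phi>) (strong_rel G S \<phi> r)"
    unfolding preorder_on_def
  proof (intro conjI)
    show "strong_rel G S \<phi> r \<subseteq> orbits G S \<phi> \<times> orbits G S \<phi>"
      unfolding strong_rel_def by auto
    show "refl_on (orbits G S \<phi>) (strong_rel G S \<phi> r)"
      unfolding refl_on_def strong_rel_def using refl orb_sub unfolding refl_on_def by blast
    show "trans (strong_rel G S \<phi> r)"
      unfolding trans_def strong_rel_def using tr unfolding trans_def by blast
  qed
  have inc: "strong_rel G S \<phi> r = weak_rel G S \<phi> r" if I: "increasing_action G S \<phi> r"
  proof
    show "strong_rel G S \<phi> r \<subseteq> weak_rel G S \<phi> r"
      unfolding strong_rel_def weak_rel_def using orb_ne by blast
    show "weak_rel G S \<phi> r \<subseteq> strong_rel G S \<phi> r"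
    proof
      fix p assume "p \<in> weak_rel G S \<phi> r"
      then obtain A B a b where p: "p = (A, B)" and A: "A \<in> orbits G S \<phi>" and B: "B \<in> orbits G S \<phi>"
        and a: "a \<in> A" and b: "b \<in> B" and ab: "(a, b) \<in> r"
        unfolding weak_rel_def by blast
      have "\<forall>a'\<in>A. \<exists>b'\<in>B. (a', b') \<in> r"
      proof
        fix a' assume "a' \<in> A"
        then obtain g where g: "g \<in> carrier G" "a' = \<phi> g a" using orb_move[OF A a] by blast
        have "(\<phi> g a, \<phi> g b) \<in> r" using I g(1) ab sub unfolding increasing_action_def by blast
        thus "\<exists>b'\<in>B. (a', b') \<in> r" using orb_img[OF B b g(1)] g by blast
      qed
      thus "p \<in> strong_rel G S \<phi> r" unfolding strong_rel_def using p A B by blast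
    qed
  qed
  have trv: "partial_order_on (orbits G S \<phi>) (strong_rel G S \<phi> r)" if T: "transverse_action G S \<phi> r"
    unfolding partial_order_on_def
  proof (intro conjI pre)
    show "antisym (strong_rel G S \<phi> r)"
      unfolding antisym_def
    proof (intro allI impI)
      fix A B assume h: "(A, B) \<in> strong_rel G S \<phi> r" "(B, A) \<in> strong_rel G S \<phi> r"
      hence A: "A \<in> orbits G S \<phi>" and B: "B \<in> orbits G S \<phi>"
        and AB: "\<forall>a\<in>A. \<exists>b\<in>B. (a, b) \<in> r" and BA: "\<forall>b\<in>B. \<exists>a\<in>A. (b, a) \<in> r"
        unfolding strong_rel_def by auto
      obtain a where a: "a \<in> A" using orb_ne[OF A] by blast
      obtain b where b: "b \<in> B" "(a, b) \<in> r" using AB a by blast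
      obtain a' where a': "a' \<in> A" "(b, a') \<in> r" using BA b by blast
      obtain g where g: "g \<in> carrier G" "a' = \<phi> g a" using orb_move[OF A a a'(1)] by blast
      have aS: "a \<in> S" using orb_sub[OF A] a by blast
      have a'S: "a' \<in> S" using orb_sub[OF A] a'(1) by blast
      have ia: "\<phi> (inv\<^bsub>G\<^esub> g) a' = a" using orbit_sym_aux[OF g(1) aS] g by simp
      have "(a, a') \<in> r" using tr b a' unfolding trans_def by blast
      hence "(\<phi> (inv\<^bsub>G\<^esub> g) a', a') \<in> r" using ia by simp
      hence "\<phi> (inv\<^bsub>G\<^esub> g) a' = a'" using T g(1) a'S unfolding transverse_action_def by blast
      hence "a = a'" using ia by simp
      hence "a = b" using anti b a' unfolding antisym_def by blast
      thus "A = B" using orb_of[OF A a] orb_of[OF B] b by simp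
    qed
  qed
  show ?thesis using pre inc trv by blast
qed

end
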